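(* Let $G$ be a connected (finite, simple) graph, $\mathcal{F}$ a maximum induced forest of $G$, $S=V(G)\setminus V(\mathcal{F})$, $H$ the contracted graph, and $B$ a skeleton of $H$ with the maximum possible number of 2-edges among all skeletons (all as defined in the context). Let $L_S$ be the set of vertices of $S$ that are leaves of $B$ and $B_1=B[V(B)\setminus L_S]$. Then for each 1-edge $\overrightarrow{uv}$ of $B_1$ (directed from $u$ to its parent $v$), either $u$ is a tree vertex, or some child $u'$ of $u$ in $B_1$ is a tree vertex and $u'u$ is a 2-edge.
   Context: A maximum induced forest of $G$ is an induced forest of $G$ with the maximum number of vertices. Let $\mathcal{T}$ be the set of connected components (trees) of $\mathcal{F}$ and $S=V(G)\setminus V(\mathcal{F})$. The graph $H$ has vertex set $\{x_T : T\in\mathcal{T}\}\cup S$ (the $x_T$ are called tree vertices, the vertices of $S$ non-tree vertices) and edge set consisting of all edges of $G[S]$ together with all pairs $ux_T$ with $u\in S$, $T\in\mathcal{T}$ such that $u$ has at least one neighbor in $V(T)$ in $G$. An edge $ux_T$ of $H$ is a 2-edge if $u$ has at least two neighbors in $V(T)$ in $G$; all other edges of $H$ (including all edges with both endpoints in $S$) are 1-edges. A skeleton is a spanning tree of $H$ rooted at some tree vertex, with all edges directed towards the root (an in-arborescence). The parent of a non-root vertex is its unique out-neighbor; its children are its in-neighbors. *)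

theory Defs
  imports Main
begin

definition sgraph :: "'a set \<Rightarrow> ('a \<Rightarrow> 'a \<Rightarrow> bool) \<Rightarrow> bool" where
  "sgraph V E \<longleftrightarrow> finite V \<and> (\<forall>x y. E x y \<longrightarrow> x \<in> V \<and> y \<in> V)
     \<and> (\<forall>x y. E x y \<longrightarrow> E y x) \<and> (\<forall>x. \<not> E x x)"

definition restr :: "('a \<Rightarrow> 'a \<Rightarrow> bool) \<Rightarrow> 'a set \<Rightarrow> 'a \<Rightarrow> 'a \<Rightarrow> bool" where
  "restr E X = (\<lambda>x y. x \<in> X \<and> y \<in> X \<and> E x y)"

definition connected_graph :: "'a set \<Rightarrow> ('a \<Rightarrow> 'a \<Rightarrow> bool) \<Rightarrow> bool" where
  "connected_graph V E \<longleftrightarrow> V \<noteq> {} \<and> (\<forall>x\<in>V. \<forall>y\<in>V. (restr E V)\<^sup>*\<^sup>* x y)"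

definition is_cycle :: "('a \<Rightarrow> 'a \<Rightarrow> bool) \<Rightarrow> 'a list \<Rightarrow> bool" where
  "is_cycle E xs \<longleftrightarrow> 3 \<le> length xs \<and> distinct xs
     \<and> (\<forall>i. Suc i < length xs \<longrightarrow> E (xs ! i) (xs ! Suc i)) \<and> E (last xs) (hd xs)"

definition induced_forest :: "'a set \<Rightarrow> ('a \<Rightarrow> 'a \<Rightarrow> bool) \<Rightarrow> 'a set \<Rightarrow> bool" where
  "induced_forest V E F \<longleftrightarrow> F \<subseteq> V \<and> \<not> (\<exists>xs. set xs \<subseteq> F \<and> is_cycle E xs)"

definition max_induced_forest :: "'a set \<Rightarrow> ('a \<Rightarrow> 'a \<Rightarrow> bool) \<Rightarrow> 'a set \<Rightarrow> bool" where
  "max_induced_forest V E F \<longleftrightarrow> induced_forest V E F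
     \<and> (\<forall>F'. induced_forest V E F' \<longrightarrow> card F' \<le> card F)"

definition components :: "('a \<Rightarrow> 'a \<Rightarrow> bool) \<Rightarrow> 'a set \<Rightarrow> 'a set set" where
  "components E F = {{y. (restr E F)\<^sup>*\<^sup>* x y} | x. x \<in> F}"

text \<open>Contracted graph H: tree vertices are Inl T (T a component), non-tree vertices Inr u (u in S).\<close>
definition H_verts :: "'a set \<Rightarrow> ('a \<Rightarrow> 'a \<Rightarrow> bool) \<Rightarrow> 'a set \<Rightarrow> ('a set + 'a) set" where
  "H_verts V E F = Inl ` components E F \<union> Inr ` (V - F)"

definition H_adj :: "'a set \<Rightarrow> ('a \<Rightarrow> 'a \<Rightarrow> bool) \<Rightarrow> 'a set \<Rightarrow> ('a set + 'a) \<Rightarrow> ('a set + 'a) \<Rightarrow> bool" where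
  "H_adj V E F a b = (case (a, b) of
      (Inr u, Inr w) \<Rightarrow> u \<in> V - F \<and> w \<in> V - F \<and> E u w
    | (Inr u, Inl T) \<Rightarrow> u \<in> V - F \<and> T \<in> components E F \<and> (\<exists>t\<in>T. E u t)
    | (Inl T, Inr u) \<Rightarrow> u \<in> V - F \<and> T \<in> components E F \<and> (\<exists>t\<in>T. E u t)
    | (Inl _, Inl _) \<Rightarrow> False)"

definition two_edge :: "('a \<Rightarrow> 'a \<Rightarrow> bool) \<Rightarrow> ('a set + 'a) \<Rightarrow> ('a set + 'a) \<Rightarrow> bool" where
  "two_edge E a b = (case (a, b) of
      (Inr u, Inl T) \<Rightarrow> 2 \<le> card {t\<in>T. E u t}
    | (Inl T, Inr u) \<Rightarrow> 2 \<le> card {t\<in>T. E u t}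
    | _ \<Rightarrow> False)"

text \<open>Skeleton: spanning in-arborescence of H rooted at tree vertex r, given by its arc set P;
  (a,b) \<in> P means b is the parent of a.\<close>
definition skeleton :: "'a set \<Rightarrow> ('a \<Rightarrow> 'a \<Rightarrow> bool) \<Rightarrow> 'a set \<Rightarrow> ('a set + 'a)
    \<Rightarrow> (('a set + 'a) \<times> ('a set + 'a)) set \<Rightarrow> bool" where
  "skeleton V E F r P \<longleftrightarrow> r \<in> Inl ` components E F
     \<and> P \<subseteq> {(a, b). H_adj V E F a b}
     \<and> (\<forall>a\<in>H_verts V E F. a \<noteq> r \<longrightarrow> (\<exists>!b. (a, b) \<in> P))
     \<and> (\<forall>b. (r, b) \<notin> P)
     \<and> (\<forall>a\<in>H_verts V E F. (a, r) \<in> P\<^sup>*)"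

definition num_two_edges :: "('a \<Rightarrow> 'a \<Rightarrow> bool) \<Rightarrow> (('a set + 'a) \<times> ('a set + 'a)) set \<Rightarrow> nat" where
  "num_two_edges E P = card {(a, b) \<in> P. two_edge E a b}"

definition is_leaf :: "(('b \<times> 'b) set) \<Rightarrow> 'b \<Rightarrow> bool" where
  "is_leaf P a \<longleftrightarrow> card {b. (a, b) \<in> P \<or> (b, a) \<in> P} = 1"

definition leaves_S :: "'a set \<Rightarrow> ('a \<Rightarrow> 'a \<Rightarrow> bool) \<Rightarrow> 'a set \<Rightarrow> (('a set + 'a) \<times> ('a set + 'a)) set
    \<Rightarrow> ('a set + 'a) set" where
  "leaves_S V E F P = {a \<in> Inr ` (V - F). is_leaf P a}"

end

theory Submission imports Defs begin

definition arb :: "'b set \<Rightarrow> ('b \<times> 'b) set \<Rightarrow> 'b \<Rightarrow> bool" where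
  "arb W P r \<longleftrightarrow> r \<in> W \<and> P \<subseteq> W \<times> W \<and> (\<forall>a\<in>W. a \<noteq> r \<longrightarrow> (\<exists>!b. (a,b)\<in>P))
     \<and> (\<forall>b. (r,b)\<notin>P) \<and> (\<forall>a\<in>W. (a,r)\<in>P\<^sup>*)"

lemma root_reach: assumes "arb W P r" "(r,y)\<in>P\<^sup>*" shows "y = r"
  using assms(2) by (cases rule: converse_rtranclE) (use assms(1) in \<open>auto simp: arb_def\<close>)

lemma flip_reach:
  assumes "(x,r) \<in> P\<^sup>*"
  shows "(x,a) \<in> (P - {(a,r)})\<^sup>* \<or> (x,r) \<in> (P - {(a,r)})\<^sup>*"
  using assms
proof (induction rule: converse_rtrancl_induct)
  case base then show ?case by simp
next
  case (step x y)
  show ?case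
  proof (cases "(x,y) = (a,r)")
    case True then show ?thesis by simp
  next
    case False
    then have "(x,y) \<in> P - {(a,r)}" using step by simp
    then show ?thesis using step.IH by (meson converse_rtrancl_into_rtrancl)
  qed
qed

lemma flip:
  assumes A: "arb W P r" and ar: "(a,r) \<in> P"
  shows "arb W (P - {(a,r)} \<union> {(r,a)}) a"
proof -
  let ?P = "P - {(a,r)} \<union> {(r,a)}"
  have W: "a \<in> W" "r \<in> W" using A ar by (auto simp: arb_def)
  have ne: "a \<noteq> r" using A ar by (auto simp: arb_def)
  have par: "\<And>b. (a,b) \<in> P \<Longrightarrow> b = r" using A ar W ne unfolding arb_def by metis
  have "\<forall>x\<in>W. x \<noteq> a \<longrightarrow> (\<exists>!b. (x,b)\<in>?P)"
  proof (intro ballI impI)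
    fix x assume x: "x \<in> W" "x \<noteq> a"
    show "\<exists>!b. (x,b)\<in>?P"
    proof (cases "x = r")
      case True then show ?thesis using A unfolding arb_def by auto
    next
      case False
      then obtain b where "(x,b) \<in> P" "\<And>c. (x,c)\<in>P \<Longrightarrow> c = b" using A x unfolding arb_def by metis
      then show ?thesis using x False by auto
    qed
  qed
  moreover have "\<forall>b. (a,b) \<notin> ?P" using par ne by auto
  moreover have "\<forall>x\<in>W. (x,a)\<in>?P\<^sup>*"
  proof
    fix x assume "x \<in> W"
    then have "(x,r) \<in> P\<^sup>*" using A by (auto simp: arb_def)
    then have "(x,a) \<in> (P - {(a,r)})\<^sup>* \<or> (x,r) \<in> (P - {(a,r)})\<^sup>*" by (rule flip_reach)
    moreover have "(P - {(a,r)})\<^sup>* \<subseteq> ?P\<^sup>*" by (rule rtrancl_mono) auto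
    moreover have "(r,a) \<in> ?P\<^sup>*" by auto
    ultimately show "(x,a)\<in>?P\<^sup>*" by (meson rtrancl_trans subsetD)
  qed
  moreover have "?P \<subseteq> W \<times> W" using A W by (auto simp: arb_def)
  ultimately show ?thesis using W unfolding arb_def by blast
qed

lemma card_flip:
  assumes "finite P" "(a,b) \<in> P" "(b,a) \<notin> P" "\<And>x y. t x y = t y x"
  shows "card {(x,y) \<in> P - {(a,b)} \<union> {(b,a)}. t x y} = card {(x,y) \<in> P. t x y}"
proof (cases "t a b")
  case True
  let ?S = "{(x,y) \<in> P. t x y}"
  have fin: "finite ?S" using assms(1) by (rule rev_finite_subset) auto
  have "{(x,y) \<in> P - {(a,b)} \<union> {(b,a)}. t x y} = insert (b,a) (?S - {(a,b)})"
    using True assms(4) by auto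
  moreover have "(b,a) \<notin> ?S - {(a,b)}" using assms(3) by auto
  moreover have "(a,b) \<in> ?S" using True assms(2) by auto
  ultimately have "card {(x,y) \<in> P - {(a,b)} \<union> {(b,a)}. t x y} = Suc (card ?S - 1)"
    using fin by (simp add: card_Diff_singleton)
  moreover have "card ?S > 0" using fin \<open>(a,b) \<in> ?S\<close> card_gt_0_iff by blast
  ultimately show ?thesis by simp
next
  case False
  then have "{(x,y) \<in> P - {(a,b)} \<union> {(b,a)}. t x y} = {(x,y) \<in> P. t x y}"
    using assms(4) by auto
  then show ?thesis by simp
qed

lemma evert:
  assumes A: "arb W P r" and fin: "finite P" and t: "\<And>x y. t x y = t y x"
    and reach: "(a,r) \<in> P\<^sup>*"
  shows "\<exists>P'. arb W P' a \<and> P' \<union> P'\<inverse> = P \<union> P\<inverse>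
      \<and> card {(x,y) \<in> P'. t x y} = card {(x,y) \<in> P. t x y}"
  using reach
proof (induction rule: converse_rtrancl_induct)
  case base then show ?case using A by blast
next
  case (step a a')
  then obtain P1 where P1: "arb W P1 a'" "P1 \<union> P1\<inverse> = P \<union> P\<inverse>"
    "card {(x,y) \<in> P1. t x y} = card {(x,y) \<in> P. t x y}" by blast
  have "(a,a') \<in> P1 \<union> P1\<inverse>" using P1(2) step(1) by auto
  moreover have "(a',a) \<notin> P1" using P1(1) by (auto simp: arb_def)
  ultimately have e: "(a,a') \<in> P1" by auto
  have "P1 \<subseteq> P \<union> P\<inverse>" using P1(2) by blast
  then have fin1: "finite P1" using fin by (meson finite_Un finite_converse finite_subset)
  let ?P2 = "P1 - {(a,a')} \<union> {(a',a)}"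
  have "arb W ?P2 a" using flip[OF P1(1) e] .
  moreover have "?P2 \<union> ?P2\<inverse> = P \<union> P\<inverse>" using P1(2) e by auto
  moreover have "card {(x,y) \<in> ?P2. t x y} = card {(x,y) \<in> P. t x y}"
    using card_flip[OF fin1 e \<open>(a',a) \<notin> P1\<close> t] P1(3) by simp
  ultimately show ?case by blast
qed

lemma reparent_reach1:
  assumes "(y,r) \<in> P\<^sup>*" "(y,x) \<notin> P\<^sup>*"
  shows "(y,r) \<in> (P - {(x,p)})\<^sup>*"
  using assms
proof (induction rule: converse_rtrancl_induct)
  case base then show ?case by simp
next
  case (step y z)
  have "(z,x) \<notin> P\<^sup>*" using step by (meson converse_rtrancl_into_rtrancl)
  moreover have "y \<noteq> x" using step by auto
  ultimately show ?case using step by (meson DiffI converse_rtrancl_into_rtrancl prod.inject singletonD)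
qed

lemma reparent_reach2:
  assumes "(y,x) \<in> P\<^sup>*"
  shows "(y,x) \<in> (P - {(x,p)})\<^sup>*"
  using assms
proof (induction rule: converse_rtrancl_induct)
  case base then show ?case by simp
next
  case (step y z)
  show ?case
  proof (cases "y = x")
    case True then show ?thesis by simp
  next
    case False
    then show ?thesis using step by (meson DiffI converse_rtrancl_into_rtrancl prod.inject singletonD)
  qed
qed

lemma reparent:
  assumes A: "arb W P r" and x: "x \<in> W" "x \<noteq> r" and b: "b \<in> W" "(b,x) \<notin> P\<^sup>*"
    and p: "(x,p) \<in> P"
  shows "arb W (P - {(x,p)} \<union> {(x,b)}) r"
proof -
  let ?P = "P - {(x,p)} \<union> {(x,b)}"
  have par: "\<And>c. (x,c) \<in> P \<Longrightarrow> c = p" using A x p unfolding arb_def by metis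
  have "\<forall>y\<in>W. y \<noteq> r \<longrightarrow> (\<exists>!c. (y,c)\<in>?P)"
  proof (intro ballI impI)
    fix y assume y: "y \<in> W" "y \<noteq> r"
    show "\<exists>!c. (y,c)\<in>?P"
    proof (cases "y = x")
      case True then show ?thesis using par by auto
    next
      case False
      then obtain c where "(y,c) \<in> P" "\<And>d. (y,d)\<in>P \<Longrightarrow> d = c" using A y unfolding arb_def by metis
      then show ?thesis using y False by auto
    qed
  qed
  moreover have "\<forall>c. (r,c) \<notin> ?P" using A x by (auto simp: arb_def)
  moreover have "\<forall>y\<in>W. (y,r)\<in>?P\<^sup>*"
  proof
    fix y assume "y \<in> W"
    then have yr: "(y,r) \<in> P\<^sup>*" using A by (auto simp: arb_def)
    have mono: "(P - {(x,p)})\<^sup>* \<subseteq> ?P\<^sup>*" by (rule rtrancl_mono) auto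
    have "(b,r) \<in> P\<^sup>*" using A b(1) by (simp add: arb_def)
    then have "(b,r) \<in> (P - {(x,p)})\<^sup>*" using reparent_reach1 b(2) by metis
    then have br: "(b,r) \<in> ?P\<^sup>*" using mono by blast
    show "(y,r)\<in>?P\<^sup>*"
    proof (cases "(y,x) \<in> P\<^sup>*")
      case True
      then have "(y,x) \<in> (P - {(x,p)})\<^sup>*" by (rule reparent_reach2)
      then have "(y,x) \<in> ?P\<^sup>*" using mono by (meson subsetD)
      moreover have "(x,b) \<in> ?P\<^sup>*" by (rule r_into_rtrancl) simp
      ultimately show ?thesis using br by (meson rtrancl_trans)
    next
      case False
      then show ?thesis using reparent_reach1[OF yr False] mono by (meson subsetD)
    qed
  qed
  moreover have "?P \<subseteq> W \<times> W" using A x b by (auto simp: arb_def)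
  moreover have "r \<in> W" using A by (simp add: arb_def)
  ultimately show ?thesis unfolding arb_def by blast
qed


lemma cycle_alt:
  "is_cycle E xs \<longleftrightarrow> 3 \<le> length xs \<and> distinct xs \<and>
     (\<forall>i<length xs. E (xs!i) (xs!(Suc i mod length xs)))"
proof
  assume c: "is_cycle E xs"
  then have L: "3 \<le> length xs" by (simp add: is_cycle_def)
  have "\<forall>i<length xs. E (xs!i) (xs!(Suc i mod length xs))"
  proof (intro allI impI)
    fix i assume i: "i < length xs"
    show "E (xs!i) (xs!(Suc i mod length xs))"
    proof (cases "Suc i < length xs")
      case True then show ?thesis using c by (simp add: is_cycle_def)
    next
      case False
      then have si: "Suc i = length xs" using i by simp
      then have "i = length xs - 1" "Suc i mod length xs = 0" by auto
      moreover have "xs \<noteq> []" using L by auto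
      ultimately show ?thesis using c L by (simp add: is_cycle_def last_conv_nth hd_conv_nth)
    qed
  qed
  then show "3 \<le> length xs \<and> distinct xs \<and> (\<forall>i<length xs. E (xs!i) (xs!(Suc i mod length xs)))"
    using c by (simp add: is_cycle_def)
next
  assume c: "3 \<le> length xs \<and> distinct xs \<and> (\<forall>i<length xs. E (xs!i) (xs!(Suc i mod length xs)))"
  then have "E (xs ! (length xs - 1)) (xs ! 0)"
    by (metis One_nat_def Suc_pred' diff_less le_zero_eq less_numeral_extra(1) mod_self not_gr_zero zero_neq_numeral)
  moreover have "xs \<noteq> []" using c by auto
  ultimately have "E (last xs) (hd xs)" using c by (simp add: last_conv_nth hd_conv_nth)
  moreover have "\<forall>i. Suc i < length xs \<longrightarrow> E (xs!i) (xs!Suc i)" using c by (metis Suc_lessD mod_less)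
  ultimately show "is_cycle E xs" using c by (simp add: is_cycle_def)
qed

lemma cycle_rotate:
  assumes "is_cycle E xs" shows "is_cycle E (rotate n xs)"
proof -
  let ?L = "length xs"
  have c: "3 \<le> ?L" "distinct xs" "\<forall>i<?L. E (xs!i) (xs!(Suc i mod ?L))"
    using assms by (auto simp: cycle_alt)
  have "\<forall>i<?L. E (rotate n xs ! i) (rotate n xs ! (Suc i mod ?L))"
  proof (intro allI impI)
    fix i assume i: "i < ?L"
    have p: "?L > 0" using c by auto
    have "rotate n xs ! i = xs ! ((n + i) mod ?L)" using i nth_rotate by blast
    moreover have "rotate n xs ! (Suc i mod ?L) = xs ! ((n + Suc i mod ?L) mod ?L)"
      using p nth_rotate[of "Suc i mod ?L" xs n] by simp
    moreover have "(n + Suc i mod ?L) mod ?L = Suc ((n + i) mod ?L) mod ?L"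
      by (simp add: mod_add_right_eq mod_Suc_eq)
    moreover have "(n + i) mod ?L < ?L" using p by simp
    ultimately show "E (rotate n xs ! i) (rotate n xs ! (Suc i mod ?L))" using c(3) by simp
  qed
  then show ?thesis using c by (simp add: cycle_alt)
qed

lemma two_nbrs:
  assumes G: "sgraph V E" and M: "max_induced_forest V E F" and u0: "u0 \<in> V - F"
  shows "\<exists>T\<in>components E F. 2 \<le> card {t\<in>T. E u0 t}"
proof (rule ccontr)
  assume nc: "\<not> ?thesis"
  have FV: "F \<subseteq> V" using M by (simp add: max_induced_forest_def induced_forest_def)
  have finV: "finite V" using G by (simp add: sgraph_def)
  have Esym: "\<And>x y. E x y \<Longrightarrow> E y x" using G by (simp add: sgraph_def)
  have EV: "\<And>x y. E x y \<Longrightarrow> y \<in> V" using G by (simp add: sgraph_def)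
  have "induced_forest V E (insert u0 F)"
  proof -
    have "\<not> (\<exists>xs. set xs \<subseteq> insert u0 F \<and> is_cycle E xs)"
    proof
      assume "\<exists>xs. set xs \<subseteq> insert u0 F \<and> is_cycle E xs"
      then obtain xs where xs: "set xs \<subseteq> insert u0 F" "is_cycle E xs" by blast
      show False
      proof (cases "u0 \<in> set xs")
        case False
        then have "set xs \<subseteq> F" using xs by auto
        then show False using xs M by (auto simp: max_induced_forest_def induced_forest_def)
      next
        case True
        then obtain n where n: "n < length xs" "xs ! n = u0" by (meson in_set_conv_nth)
        define ys where "ys = rotate n xs"
        have ys: "is_cycle E ys" unfolding ys_def using xs(2) by (rule cycle_rotate)
        have L: "length ys = length xs" unfolding ys_def by simp
        have ys0: "ys ! 0 = u0" unfolding ys_def using n nth_rotate[of 0 xs n] by (cases xs) auto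
        have sys: "set ys \<subseteq> insert u0 F" unfolding ys_def using xs by simp
        let ?L = "length ys"
        have c: "3 \<le> ?L" "distinct ys" "\<forall>i<?L. E (ys!i) (ys!(Suc i mod ?L))"
          using ys by (auto simp: cycle_alt)
        have ysne: "ys \<noteq> []" using c(1) by auto
        have inF: "\<And>j. 0 < j \<Longrightarrow> j < ?L \<Longrightarrow> ys ! j \<in> F"
        proof -
          fix j assume j: "0 < j" "j < ?L"
          have "ys ! j \<noteq> ys ! 0" using c(2) j nth_eq_iff_index_eq[of ys j 0] by (cases ys) auto
          moreover have "ys ! j \<in> set ys" using j by simp
          ultimately show "ys ! j \<in> F" using sys ys0 by auto
        qed
        define a where "a = ys ! 1"
        define b where "b = ys ! (?L - 1)"
        have aF: "a \<in> F" and bF: "b \<in> F" unfolding a_def b_def using inF c(1) by auto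
        have ab: "a \<noteq> b"
        proof -
          have "1 < ?L" "?L - 1 < ?L" "1 \<noteq> ?L - 1" using c(1) by auto
          then show ?thesis unfolding a_def b_def using c(2) nth_eq_iff_index_eq[of ys 1 "?L - 1"] by simp
        qed
        have Ea: "E u0 a" using c(3)[rule_format, of 0] c(1) ys0 a_def ysne by simp
        have "E b u0"
        proof -
          have "Suc (?L - 1) = ?L" using c(1) by simp
          then have "Suc (?L - 1) mod ?L = 0" by simp
          then show ?thesis using c(3)[rule_format, of "?L - 1"] c(1) ys0 b_def ysne by simp
        qed
        then have Eb: "E u0 b" by (rule Esym)
        have path: "\<And>j. 1 \<le> j \<Longrightarrow> j < ?L \<Longrightarrow> (restr E F)\<^sup>*\<^sup>* a (ys ! j)"
        proof -
          fix j show "1 \<le> j \<Longrightarrow> j < ?L \<Longrightarrow> (restr E F)\<^sup>*\<^sup>* a (ys ! j)"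
          proof (induction j)
            case 0 then show ?case by simp
          next
            case (Suc j)
            show ?case
            proof (cases "j = 0")
              case True then show ?thesis by (simp add: a_def)
            next
              case False
              then have IH: "(restr E F)\<^sup>*\<^sup>* a (ys ! j)" using Suc by simp
              have "E (ys ! j) (ys ! Suc j)" using c(3)[rule_format, of j] Suc by simp
              moreover have "ys ! j \<in> F" "ys ! Suc j \<in> F" using inF False Suc by auto
              ultimately have "restr E F (ys ! j) (ys ! Suc j)" by (simp add: restr_def)
              then show ?thesis using IH by (meson rtranclp.rtrancl_into_rtrancl)
            qed
          qed
        qed
        have "(restr E F)\<^sup>*\<^sup>* a b" unfolding b_def using path c(1) by simp
        define T where "T = {y. (restr E F)\<^sup>*\<^sup>* a y}"
        have T: "T \<in> components E F" unfolding T_def components_def using aF by blast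
        have sub: "{a,b} \<subseteq> {t\<in>T. E u0 t}" using Ea Eb \<open>(restr E F)\<^sup>*\<^sup>* a b\<close> T_def by auto
        have "finite {t\<in>T. E u0 t}" using finV EV by (metis (no_types, lifting) mem_Collect_eq rev_finite_subset subsetI)
        then have "card {a,b} \<le> card {t\<in>T. E u0 t}" using sub card_mono by blast
        then have "2 \<le> card {t\<in>T. E u0 t}" using ab by simp
        then show False using nc T by blast
      qed
    qed
    then show ?thesis using FV u0 by (simp add: induced_forest_def)
  qed
  then have "card (insert u0 F) \<le> card F" using M by (simp add: max_induced_forest_def)
  moreover have "finite F" using FV finV finite_subset by blast
  ultimately show False using u0 by simp
qed


lemma H_adj_verts: "H_adj V E F a b \<Longrightarrow> a \<in> H_verts V E F \<and> b \<in> H_verts V E F"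
  by (cases a; cases b) (auto simp: H_adj_def H_verts_def)

lemma H_adj_sym: "sgraph V E \<Longrightarrow> H_adj V E F a b = H_adj V E F b a"
  by (cases a; cases b) (auto simp: H_adj_def sgraph_def)

lemma two_edge_sym: "two_edge E a b = two_edge E b a"
  by (cases a; cases b) (auto simp: two_edge_def)

lemma two_edge_Inr: "two_edge E (Inr x) b \<Longrightarrow> isl b"
  by (cases b) (auto simp: two_edge_def)

lemma finite_Hv: "finite V \<Longrightarrow> finite F \<Longrightarrow> finite (H_verts V E F)"
proof -
  assume fV: "finite V" and fF: "finite F"
  have "components E F = (\<lambda>x. {y. (restr E F)\<^sup>*\<^sup>* x y}) ` F" unfolding components_def by blast
  then have "finite (components E F)" using fF by simp
  then show ?thesis using fV unfolding H_verts_def by simp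
qed

lemma skel_arb: assumes "skeleton V E F r P" shows "arb (H_verts V E F) P r"
proof -
  have "r \<in> H_verts V E F" using assms by (auto simp: skeleton_def H_verts_def)
  moreover have "P \<subseteq> H_verts V E F \<times> H_verts V E F" using assms H_adj_verts by (fastforce simp: skeleton_def)
  ultimately show ?thesis using assms unfolding skeleton_def arb_def by simp
qed

lemma arb_skel: "r \<in> Inl ` components E F \<Longrightarrow> P \<subseteq> {(a, b). H_adj V E F a b}
   \<Longrightarrow> arb (H_verts V E F) P r \<Longrightarrow> skeleton V E F r P"
  unfolding skeleton_def arb_def by simp

lemma leaves_Inr: "a \<in> leaves_S V E F P \<Longrightarrow> \<not> isl a"
  unfolding leaves_S_def by auto

theorem corollary4:
  fixes V :: "'a set" and E :: "'a \<Rightarrow> 'a \<Rightarrow> bool" and F :: "'a set"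
    and r :: "'a set + 'a" and P :: "(('a set + 'a) \<times> ('a set + 'a)) set"
  assumes "sgraph V E"
    and "connected_graph V E"
    and "max_induced_forest V E F"
    and "skeleton V E F r P"
    and "\<forall>r' P'. skeleton V E F r' P' \<longrightarrow> num_two_edges E P' \<le> num_two_edges E P"
    and "(u, v) \<in> P"
    and "u \<notin> leaves_S V E F P" and "v \<notin> leaves_S V E F P"
    and "\<not> two_edge E u v"
  shows "isl u \<or> (\<exists>u'. (u', u) \<in> P \<and> u' \<notin> leaves_S V E F P \<and> isl u' \<and> two_edge E u' u)"
proof (rule ccontr)
  assume nc: "\<not> ?thesis"
  then obtain u0 where u: "u = Inr u0" by (cases u) auto
  let ?W = "H_verts V E F"
  have G: "sgraph V E" and M: "max_induced_forest V E F" and S: "skeleton V E F r P"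
    and uv: "(u,v) \<in> P" and nte: "\<not> two_edge E u v" using assms by auto
  have A: "arb ?W P r" using S by (rule skel_arb)
  have PH: "P \<subseteq> {(a, b). H_adj V E F a b}" using S by (simp add: skeleton_def)
  have "H_adj V E F u v" using uv PH by auto
  then have u0: "u0 \<in> V - F" using u by (cases v) (auto simp: H_adj_def)
  have finV: "finite V" using G by (simp add: sgraph_def)
  have FV: "F \<subseteq> V" using M by (simp add: max_induced_forest_def induced_forest_def)
  have finF: "finite F" using FV finV finite_subset by blast
  have finW: "finite ?W" using finV finF by (rule finite_Hv)
  obtain T where T: "T \<in> components E F" "2 \<le> card {t\<in>T. E u0 t}"
    using two_nbrs[OF G M u0] by blast
  define xT where "xT = (Inl T :: 'a set + 'a)"
  have "{t\<in>T. E u0 t} \<noteq> {}" using T(2) by (metis card.empty not_numeral_le_zero)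
  then have adj: "H_adj V E F u xT" using u u0 T(1) unfolding xT_def H_adj_def by auto
  have te: "two_edge E u xT" using T(2) u unfolding xT_def two_edge_def by simp
  have xTW: "xT \<in> ?W" "u \<in> ?W" using H_adj_verts[OF adj] by auto
  have xTr: "xT \<in> Inl ` components E F" using T(1) xT_def by simp
  have notin: "(xT,u) \<notin> P"
  proof
    assume "(xT,u) \<in> P"
    moreover have "xT \<notin> leaves_S V E F P" "isl xT" using leaves_Inr[of xT V E F P] xT_def by auto
    moreover have "two_edge E xT u" using te two_edge_sym by metis
    ultimately show False using nc by blast
  qed
  have xTv: "xT \<noteq> v" using te nte by auto
  have ur: "u \<noteq> r" using S u unfolding skeleton_def by auto
  have upar: "\<And>c. (u,c) \<in> P \<Longrightarrow> c = v" using A xTW(2) ur uv unfolding arb_def by metis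
  have finP: "finite P" using A finW unfolding arb_def by (meson finite_SigmaI finite_subset)
  have "(xT, r) \<in> P\<^sup>*" using A xTW by (simp add: arb_def)
  then obtain P1 where P1: "arb ?W P1 xT" "P1 \<union> P1\<inverse> = P \<union> P\<inverse>"
      "card {(x,y) \<in> P1. two_edge E x y} = card {(x,y) \<in> P. two_edge E x y}"
    using evert[OF A finP, of "two_edge E"] two_edge_sym by blast
  have uxT: "u \<noteq> xT" using u xT_def by simp
  obtain y where y: "(u,y) \<in> P1" using P1(1) xTW uxT unfolding arb_def by metis
  have y1par: "\<And>c. (u,c) \<in> P1 \<Longrightarrow> c = y" using P1(1) xTW uxT y unfolding arb_def by metis
  have yP: "(u,y) \<in> P \<or> (y,u) \<in> P" using y P1(2) by blast
  have yxT: "y \<noteq> xT" using yP upar xTv notin by blast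
  have nty: "\<not> two_edge E u y"
  proof
    assume ty: "two_edge E u y"
    show False
    proof (cases "(u,y) \<in> P")
      case True then show False using upar ty nte by blast
    next
      case False
      then have yu: "(y,u) \<in> P" using yP by blast
      have "isl y" using ty u two_edge_Inr[of E u0 y] by simp
      moreover have "y \<notin> leaves_S V E F P" using leaves_Inr \<open>isl y\<close> by blast
      moreover have "two_edge E y u" using ty two_edge_sym by metis
      ultimately show False using nc yu by blast
    qed
  qed
  have nreach: "(xT,u) \<notin> P1\<^sup>*" using root_reach[OF P1(1)] uxT by blast
  define P2 where "P2 = P1 - {(u,y)} \<union> {(u,xT)}"
  have A2: "arb ?W P2 xT" unfolding P2_def
    by (rule reparent[OF P1(1) xTW(2) uxT xTW(1) nreach y])
  have "P1 \<subseteq> P \<union> P\<inverse>" using P1(2) by blast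
  moreover have "P \<union> P\<inverse> \<subseteq> {(a, b). H_adj V E F a b}" using PH H_adj_sym[OF G] by auto
  ultimately have "P2 \<subseteq> {(a, b). H_adj V E F a b}" using adj unfolding P2_def by auto
  then have S2: "skeleton V E F xT P2" using arb_skel[OF xTr _ A2] by blast
  have finP1: "finite P1" using \<open>P1 \<subseteq> P \<union> P\<inverse>\<close> finP by (meson finite_Un finite_converse finite_subset)
  have "{(a,b) \<in> P2. two_edge E a b} = insert (u,xT) {(a,b) \<in> P1. two_edge E a b}"
    unfolding P2_def using te nty by auto
  moreover have "(u,xT) \<notin> {(a,b) \<in> P1. two_edge E a b}" using y1par yxT by blast
  moreover have "finite {(a,b) \<in> P1. two_edge E a b}" using finP1 by (rule rev_finite_subset) auto
  ultimately have "num_two_edges E P2 = num_two_edges E P1 + 1" unfolding num_two_edges_def by simp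
  then have "num_two_edges E P2 = num_two_edges E P + 1" using P1(3) unfolding num_two_edges_def by simp
  moreover have "num_two_edges E P2 \<le> num_two_edges E P" using assms(5) S2 by blast
  ultimately show False by simp
qed

end
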